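(* For every subset $J'\subseteq J$ and every start time $t\ge 0$, there exists a partial potential schedule of $J'$ starting at $t$.
   Context: $J$ is a finite set of jobs; job $j$ has processing time $p_j>0$ and weight $w_j>0$. For $J'\subseteq J$ and $t\ge0$, a partial schedule of $J'$ starting at $t$ is an ordering of $J'$ processed consecutively without idle time from time $t$; job $j$ has (absolute) start time $t_j$. For $s\ge 0$, $\varphi_j(s)=\frac{w_j}{p_j(p_j+s)}$. For jobs $i,j$ with $w_ip_j\neq w_jp_i$, $t^*_{ij}=\frac{w_jp_i^2-w_ip_j^2}{w_ip_j-w_jp_i}$ (the unique real $s$ with $\varphi_i(s)=\varphi_j(s)$). Dominance rule: for an interval $I\subseteq[0,\infty)$, the relation "$i$ dominates $j$ on $I$" is violated by a (partial) schedule if $j$ is processed before $i$ and both $t_j\in I$ and $t_i-p_j\in I$. The rule contains, for each pair of distinct jobs $i,j$ with $(p_i,w_i)\ne(p_j,w_j)$: (1) if $\varphi_i(s)\ge\varphi_j(s)$ for all $s\ge 0$, "$i$ dominates $j$ on $[0,\infty)$"; (2) otherwise, if $\varphi_j(s)\ge\varphi_i(s)$ for all $s\ge0$, "$j$ dominates $i$ on $[0,\infty)$"; (3) otherwise, labelling the pair so that $\varphi_i(0)>\varphi_j(0)$, $t^*_{ij}>0$ is defined and the rule contains "$i$ dominates $j$ on $[0,t^*_{ij})$" and "$j$ dominates $i$ on $[t^*_{ij},\infty)$". A partial schedule of $J'$ is a partial potential schedule if it violates no relation of the rule between two jobs of $J'$. *)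

theory Defs
  imports Complex_Main
begin

definition phi :: "('j \<Rightarrow> real) \<Rightarrow> ('j \<Rightarrow> real) \<Rightarrow> 'j \<Rightarrow> real \<Rightarrow> real" where
  "phi p w j s = w j / (p j * (p j + s))"

definition tstar :: "('j \<Rightarrow> real) \<Rightarrow> ('j \<Rightarrow> real) \<Rightarrow> 'j \<Rightarrow> 'j \<Rightarrow> real" where
  "tstar p w i j = (w j * (p i)^2 - w i * (p j)^2) / (w i * p j - w j * p i)"

definition phi_ge :: "('j \<Rightarrow> real) \<Rightarrow> ('j \<Rightarrow> real) \<Rightarrow> 'j \<Rightarrow> 'j \<Rightarrow> bool" where
  "phi_ge p w i j \<longleftrightarrow> (\<forall>s\<ge>0. phi p w i s \<ge> phi p w j s)"

text \<open>The dominance rule: the set of relations (i, j, I) meaning "i dominates j on I".\<close>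
definition dominance_rule :: "'j set \<Rightarrow> ('j \<Rightarrow> real) \<Rightarrow> ('j \<Rightarrow> real) \<Rightarrow> ('j \<times> 'j \<times> real set) set" where
  "dominance_rule J p w = {(i, j, I) | i j I.
     i \<in> J \<and> j \<in> J \<and> i \<noteq> j \<and> (p i, w i) \<noteq> (p j, w j) \<and>
     ( (phi_ge p w i j \<and> I = {0..})
     \<or> (\<not> phi_ge p w i j \<and> \<not> phi_ge p w j i \<and>
          ((phi p w i 0 > phi p w j 0 \<and> I = {0..<tstar p w i j})
         \<or> (phi p w j 0 > phi p w i 0 \<and> I = {tstar p w j i..}))))}"

definition start_time :: "('j \<Rightarrow> real) \<Rightarrow> real \<Rightarrow> 'j list \<Rightarrow> nat \<Rightarrow> real" where
  "start_time p t \<sigma> k = t + sum_list (map p (take k \<sigma>))"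

definition partial_schedule :: "'j set \<Rightarrow> 'j list \<Rightarrow> bool" where
  "partial_schedule J' \<sigma> \<longleftrightarrow> distinct \<sigma> \<and> set \<sigma> = J'"

definition violates :: "('j \<Rightarrow> real) \<Rightarrow> real \<Rightarrow> 'j list \<Rightarrow> 'j \<Rightarrow> 'j \<Rightarrow> real set \<Rightarrow> bool" where
  "violates p t \<sigma> i j I \<longleftrightarrow> (\<exists>k l. k < l \<and> l < length \<sigma> \<and> \<sigma> ! k = j \<and> \<sigma> ! l = i \<and>
       start_time p t \<sigma> k \<in> I \<and> start_time p t \<sigma> l - p j \<in> I)"

definition partial_potential_schedule ::
  "'j set \<Rightarrow> ('j \<Rightarrow> real) \<Rightarrow> ('j \<Rightarrow> real) \<Rightarrow> 'j set \<Rightarrow> real \<Rightarrow> 'j list \<Rightarrow> bool" where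
  "partial_potential_schedule J p w J' t \<sigma> \<longleftrightarrow> partial_schedule J' \<sigma> \<and>
     (\<forall>(i, j, I) \<in> dominance_rule J p w. i \<in> J' \<longrightarrow> j \<in> J' \<longrightarrow> \<not> violates p t \<sigma> i j I)"

end

theory Submission imports Defs begin

lemma phi_le_iff:
  assumes "p i > 0" "p j > 0" "s \<ge> 0"
  shows "phi p w i s \<le> phi p w j s \<longleftrightarrow> w i * p j * (p j + s) \<le> w j * p i * (p i + s)"
proof -
  have a: "p i * (p i + s) > 0" "p j * (p j + s) > 0" using assms by auto
  show ?thesis unfolding phi_def using a
    by (simp add: divide_simps mult.commute mult.left_commute)
qed

lemma phi_eq_iff:
  assumes "p i > 0" "p j > 0" "s \<ge> 0"
  shows "phi p w i s = phi p w j s \<longleftrightarrow> w i * p j * (p j + s) = w j * p i * (p i + s)"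
  using phi_le_iff[where i=i and j=j and w=w, OF assms] phi_le_iff[where i=j and j=i and w=w, OF assms(2,1,3)] by linarith

definition G where "G p w j i s \<longleftrightarrow> phi p w i s < phi p w j s \<or> (phi p w i s = phi p w j s \<and> p i \<le> p j)"

lemma key:
  assumes pos: "p i > 0" "p j > 0" "w i > 0" "w j > 0" and s: "s \<ge> 0"
    and g: "G p w j i s" and r: "(i, j, I) \<in> dominance_rule J p w" and sI: "s \<in> I"
  shows False
proof -
  define a where "a = w i * p j - w j * p i"
  define b where "b = w i * p j ^ 2 - w j * p i ^ 2"
  have N: "\<And>x. x \<ge> 0 \<Longrightarrow> (phi p w j x \<le> phi p w i x \<longleftrightarrow> a * x + b \<ge> 0)"
    using phi_le_iff[where i=j and j=i and w=w, OF pos(2,1)] unfolding a_def b_def by (simp add: algebra_simps power2_eq_square)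
  have Ne: "\<And>x. x \<ge> 0 \<Longrightarrow> (phi p w j x = phi p w i x \<longleftrightarrow> a * x + b = 0)"
    using phi_eq_iff[where i=j and j=i and w=w, OF pos(2,1)] unfolding a_def b_def by (simp add: algebra_simps power2_eq_square) (smt (verit))
  have g': "a * s + b \<le> 0" "a * s + b = 0 \<Longrightarrow> p i \<le> p j"
    using g s N[of s] Ne[of s] unfolding G_def by auto
  have ts: "tstar p w i j = - b / a" "tstar p w j i = - b / a"
    unfolding tstar_def a_def b_def by (simp_all add: divide_simps algebra_simps)
  have neq: "(p i, w i) \<noteq> (p j, w j)" using r unfolding dominance_rule_def by auto
  have R: "(phi_ge p w i j \<and> I = {0..}) \<or> (\<not> phi_ge p w i j \<and> \<not> phi_ge p w j i \<and>
          ((phi p w i 0 > phi p w j 0 \<and> I = {0..<tstar p w i j})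
         \<or> (phi p w j 0 > phi p w i 0 \<and> I = {tstar p w j i..})))"
    using r unfolding dominance_rule_def by auto
  then consider (c1) "phi_ge p w i j" "I = {0..}"
    | (c2) "\<not> phi_ge p w i j" "\<not> phi_ge p w j i" "phi p w j 0 < phi p w i 0" "I = {0..<tstar p w i j}"
    | (c3) "\<not> phi_ge p w i j" "\<not> phi_ge p w j i" "phi p w i 0 < phi p w j 0" "I = {tstar p w j i..}"
    by blast
  then show False
  proof cases
    case c1
    note ge = c1(1)
    have ab: "\<And>x. x \<ge> 0 \<Longrightarrow> a * x + b \<ge> 0" using ge N unfolding phi_ge_def by auto
    have b0: "b \<ge> 0" using ab[of 0] by simp
    have a0: "a \<ge> 0"
    proof (rule ccontr)
      assume "\<not> a \<ge> 0"
      hence "a * ((b + 1) / - a) + b < 0" by (simp add: field_simps)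
      moreover have "(b + 1) / - a \<ge> 0" using b0 \<open>\<not> a \<ge> 0\<close> by (simp add: divide_nonneg_neg)
      ultimately show False using ab[of "(b + 1) / - a"] by linarith
    qed
    have "a * s \<ge> 0" using a0 s by simp
    hence eq: "a * s + b = 0" using g'(1) b0 by linarith
    hence "p i \<le> p j" using g'(2) by simp
    show False
    proof (cases "s = 0")
      case z: True
      then have "b = 0" using eq z by simp
      then have wi: "w i * p j ^ 2 = w j * p i ^ 2" unfolding b_def by simp
      have "a * p j = w j * p i * (p i - p j)" unfolding a_def using wi by (simp add: algebra_simps power2_eq_square)
      hence "w j * p i * (p i - p j) \<ge> 0" using a0 pos by (metis mult_nonneg_nonneg less_imp_le)
      moreover have "w j * p i > 0" using pos by simp
      ultimately have "p i \<ge> p j" by (simp add: zero_le_mult_iff)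
      hence "p i = p j" using \<open>p i \<le> p j\<close> by simp
      then show False using wi neq pos by (simp add: power2_eq_square)
    next
      case nz: False
      have as0: "a * s \<ge> 0" using a0 s by simp
      have "b = 0" "a * s = 0" using eq b0 as0 by linarith+
      then have "a = 0" "b = 0" using nz by simp_all
      then have e1: "w i * p j = w j * p i" and e2: "w i * p j ^ 2 = w j * p i ^ 2"
        unfolding a_def b_def by simp_all
      have "w i * p j * p j = w i * p j * p i"
        using e1 e2 by (simp add: power2_eq_square algebra_simps)
      hence "p i = p j" using pos by simp
      then show False using e1 neq pos by simp
    qed
  next
    case c2
    note ng = c2(1,2) and lt = c2(3) and I = c2(4)
    have b0: "b > 0" using N[of 0] Ne[of 0] lt by auto
    obtain x where x: "x \<ge> 0" "a * x + b < 0" using ng(1) N unfolding phi_ge_def by (auto simp: not_le)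
    have a0: "a < 0"
    proof (rule ccontr)
      assume "\<not> a < 0" hence "a * x \<ge> 0" using x(1) by simp
      thus False using x b0 by linarith
    qed
    have "s < - b / a" using sI I ts by simp
    hence "a * s + b > 0" using a0 by (simp add: field_simps)
    then show False using g'(1) by simp
  next
    case c3
    note ng = c3(1,2) and lt = c3(3) and I = c3(4)
    have b0: "b < 0" using N[of 0] lt by auto
    obtain x where x: "x \<ge> 0" "phi p w j x < phi p w i x" using ng(2) unfolding phi_ge_def by (auto simp: not_le)
    have x2: "a * x + b > 0" using x N[of x] Ne[of x] by auto
    have a0: "a > 0"
    proof (rule ccontr)
      assume "\<not> a > 0" hence "a * x \<le> 0" using x(1) by (simp add: mult_nonpos_nonneg)
      thus False using x2 b0 by linarith
    qed
    have "s \<ge> - b / a" using sI I ts by simp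
    hence "a * s + b \<ge> 0" using a0 by (simp add: field_simps)
    hence eq: "a * s + b = 0" using g'(1) by simp
    hence "p i \<le> p j" using g'(2) by simp
    have "w i * p j * p j > w j * p i * p j" using a0 pos unfolding a_def by simp
    moreover have "w i * p j * p j < w j * p i * p i" using b0 unfolding b_def by (simp add: power2_eq_square)
    ultimately have "w j * p i * p j < w j * p i * p i" by simp
    hence "p j < p i" using pos by simp
    then show False using \<open>p i \<le> p j\<close> by simp
  qed
qed

lemma exists_best:
  assumes "finite S" "S \<noteq> {}"
  shows "\<exists>j\<in>S. \<forall>i\<in>S. G p w j i t"
proof -
  define M where "M = Max ((\<lambda>x. phi p w x t) ` S)"
  define T where "T = {x\<in>S. phi p w x t = M}"
  have M: "\<And>x. x \<in> S \<Longrightarrow> phi p w x t \<le> M" unfolding M_def using assms by simp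
  have "M \<in> (\<lambda>x. phi p w x t) ` S" unfolding M_def using assms by simp
  hence Tne: "T \<noteq> {}" unfolding T_def by auto
  have Tf: "finite T" unfolding T_def using assms by simp
  define j where "j = (SOME j. j \<in> T \<and> p j = Max (p ` T))"
  have "Max (p ` T) \<in> p ` T" using Tne Tf by simp
  hence "\<exists>j. j \<in> T \<and> p j = Max (p ` T)" by auto
  hence j0: "j \<in> T \<and> p j = Max (p ` T)" unfolding j_def by (rule someI_ex)
  hence j: "j \<in> T" "p j = Max (p ` T)" by simp_all
  have "\<forall>i\<in>S. G p w j i t"
  proof
    fix i assume i: "i \<in> S"
    show "G p w j i t"
    proof (cases "phi p w i t = M")
      case True
      hence "i \<in> T" using i unfolding T_def by simp
      hence "p i \<le> p j" using j Tf by simp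
      then show ?thesis using True j(1) unfolding G_def T_def by simp
    next
      case False
      then show ?thesis using M[OF i] j(1) unfolding G_def T_def by simp
    qed
  qed
  thus ?thesis using j(1) unfolding T_def by auto
qed

lemma start_time_Cons:
  "start_time p t (j # xs) (Suc k) = start_time p (t + p j) xs k"
  "start_time p t (j # xs) 0 = t"
  unfolding start_time_def by simp_all

lemma greedy_exists:
  shows "finite S \<Longrightarrow> \<exists>\<sigma>. distinct \<sigma> \<and> set \<sigma> = S \<and>
     (\<forall>k l. k < l \<longrightarrow> l < length \<sigma> \<longrightarrow> G p w (\<sigma>!k) (\<sigma>!l) (start_time p t \<sigma> k))"
proof (induction "card S" arbitrary: S t)
  case 0
  then show ?case by (intro exI[of _ "[]"]) simp
next
  case (Suc n)
  have ne: "S \<noteq> {}" using Suc.hyps(2) by (metis card.empty nat.distinct(1))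
  obtain j where j: "j \<in> S" "\<forall>i\<in>S. G p w j i t" using exists_best[OF Suc.prems ne] by blast
  obtain xs where xs: "distinct xs" "set xs = S - {j}"
    "\<forall>k l. k < l \<longrightarrow> l < length xs \<longrightarrow> G p w (xs!k) (xs!l) (start_time p (t + p j) xs k)"
  proof -
    have "card (S - {j}) = card S - 1" using j(1) Suc.prems by (simp only: card_Diff_singleton)
    hence "n = card (S - {j})" using Suc.hyps(2) by linarith
    moreover have "finite (S - {j})" using Suc.prems by (simp only: finite_Diff)
    ultimately obtain xs where "distinct xs \<and> set xs = S - {j} \<and>
     (\<forall>k l. k < l \<longrightarrow> l < length xs \<longrightarrow> G p w (xs!k) (xs!l) (start_time p (t + p j) xs k))"
      using Suc.hyps(1)[of "S - {j}" "t + p j"] by blast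
    thus ?thesis using that by blast
  qed
  have "\<forall>k l. k < l \<longrightarrow> l < length (j # xs) \<longrightarrow> G p w ((j#xs)!k) ((j#xs)!l) (start_time p t (j#xs) k)"
  proof (intro allI impI)
    fix k l assume kl: "k < l" "l < length (j # xs)"
    show "G p w ((j#xs)!k) ((j#xs)!l) (start_time p t (j#xs) k)"
    proof (cases k)
      case 0
      obtain l' where l': "l = Suc l'" using kl 0 by (cases l) auto
      have "l' < length xs" using l' kl(2) by simp
      hence "xs ! l' \<in> S" using nth_mem[of l' xs] xs(2) by blast
      hence "G p w j (xs ! l') t" using j(2) by blast
      then show ?thesis using 0 l' by (simp only: nth_Cons_0 nth_Cons_Suc start_time_Cons)
    next
      case (Suc k')
      obtain l' where l': "l = Suc l'" using kl Suc by (cases l) auto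
      have "k' < l'" "l' < length xs" using kl Suc l' by simp_all
      hence "G p w (xs!k') (xs!l') (start_time p (t + p j) xs k')" using xs(3) by blast
      then show ?thesis using Suc l' by (simp only: nth_Cons_Suc start_time_Cons)
    qed
  qed
  moreover have "distinct (j # xs)" using xs(1,2) by simp
  moreover have "set (j # xs) = S" by (simp only: list.set(2) xs(2) insert_Diff[OF j(1)])
  ultimately show ?case by (intro exI[of _ "j # xs"]) (simp only: conj_assoc)
qed

theorem lemma6:
  fixes J :: "'j set" and p w :: "'j \<Rightarrow> real"
  assumes "finite J"
    and "\<And>j. j \<in> J \<Longrightarrow> p j > 0"
    and "\<And>j. j \<in> J \<Longrightarrow> w j > 0"
  shows "\<forall>J' t. J' \<subseteq> J \<longrightarrow> t \<ge> 0 \<longrightarrow> (\<exists>\<sigma>. partial_potential_schedule J p w J' t \<sigma>)"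
proof (intro allI impI)
  fix J' t assume J': "J' \<subseteq> J" and t: "(t::real) \<ge> 0"
  have fin: "finite J'" using J' assms(1) finite_subset by blast
  obtain \<sigma> where s: "distinct \<sigma>" "set \<sigma> = J'"
    "\<forall>k l. k < l \<longrightarrow> l < length \<sigma> \<longrightarrow> G p w (\<sigma>!k) (\<sigma>!l) (start_time p t \<sigma> k)"
    using greedy_exists[OF fin, of p w t] by blast
  have "\<not> violates p t \<sigma> i j I" if r: "(i, j, I) \<in> dominance_rule J p w" and ij: "i \<in> J'" "j \<in> J'" for i j I
  proof
    assume "violates p t \<sigma> i j I"
    then obtain k l where kl: "k < l" "l < length \<sigma>" "\<sigma> ! k = j" "\<sigma> ! l = i"
      "start_time p t \<sigma> k \<in> I" unfolding violates_def by blast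
    have "\<forall>x \<in> set (map p (take k \<sigma>)). x \<ge> 0"
      using s(2) J' assms(2) by (auto dest!: in_set_takeD intro: less_imp_le)
    hence "sum_list (map p (take k \<sigma>)) \<ge> 0" by (metis sum_list_nonneg)
    hence st: "start_time p t \<sigma> k \<ge> 0" unfolding start_time_def using t by simp
    have G: "G p w j i (start_time p t \<sigma> k)" using s(3)[rule_format, OF kl(1,2)] kl(3,4) by simp
    have iJ: "i \<in> J" "j \<in> J" using ij J' by auto
    have pw: "p i > 0" "p j > 0" "w i > 0" "w j > 0" using iJ assms(2,3) by auto
    show False
      by (rule key[where p=p and w=w and i=i and j=j and s="start_time p t \<sigma> k" and I=I and J=J, OF pw st G r kl(5)])
  qed
  thus "\<exists>\<sigma>. partial_potential_schedule J p w J' t \<sigma>"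
    unfolding partial_potential_schedule_def partial_schedule_def using s by blast
qed

end
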